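(* Consider the classical spin triangle with Heisenberg Hamiltonian $H(\mathbf{s})=J_1\,\mathbf{s}_2\cdot\mathbf{s}_3+J_2\,\mathbf{s}_3\cdot\mathbf{s}_1+J_3\,\mathbf{s}_1\cdot\mathbf{s}_2$ with unit spin vectors $\mathbf{s}_1,\mathbf{s}_2,\mathbf{s}_3$, and write the Gram matrix of a spin configuration as $G=\begin{pmatrix}1&u&v\\ u&1&w\\ v&w&1\end{pmatrix}$, i.e. $u=\mathbf{s}_1\cdot\mathbf{s}_2$, $v=\mathbf{s}_1\cdot\mathbf{s}_3$, $w=\mathbf{s}_2\cdot\mathbf{s}_3$, so that $H=J_1 w+J_2 v+J_3 u$ and $\det G=1+2uvw-(u^2+v^2+w^2)$. Let $\mathbf{J}=(J_1,J_2,J_3)$ and let $\mathbf{E}_0=(1,1,1)$, $\mathbf{E}_1=(1,-1,-1)$, $\mathbf{E}_2=(-1,1,-1)$, $\mathbf{E}_3=(-1,-1,1)$ be the coordinate vectors $(w,v,u)$ of the four Ising Gram matrices. If $\mathbf{J}$ satisfies none of the four conditions $\mathbf{J}\cdot\mathbf{E}_i\le-\|\mathbf{J}\|$ ($i=0,1,2,3$), then the ground states are co-planar, with $\det G=0$ and $-1<u,v,w<1$, and $\mathbf{J}$ is proportional to the gradient of $\mathcal{D}=\det G$: $J_1=2\mu(uv-w)$, $J_2=2\mu(wu-v)$, $J_3=2\mu(vw-u)$. Solving these together with $\mathcal{D}=0$ gives $$u=\frac{J_1}{2J_2}\Big(\frac{J_2^2}{J_3^2}-1\Big)-\frac{J_2}{2J_1},\quad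 v=\frac{J_1}{2J_3}\Big(\frac{J_3^2}{J_2^2}-1\Big)-\frac{J_3}{2J_1},\quad w=\frac{J_2}{2J_3}\Big(\frac{J_3^2}{J_1^2}-1\Big)-\frac{J_3}{2J_2},$$ $$\mu=\frac{-2J_1^3J_2^3J_3^3}{J_1^4(J_2^2-J_3^2)^2-2J_1^2J_2^2J_3^2(J_2^2+J_3^2)+J_2^4J_3^4},$$ and the ground state energy is $E_{min}=J_1w+J_2v+J_3u$.
   Context: Classical spin triangle ($N=3$); Gram set $\mathcal{G}=\{G\ge 0,\ G_{\mu\mu}=1\}$ parametrized by $(u,v,w)$; ground states correspond to boundary points of $\mathcal{G}$ where the affine functional $(u,v,w)\mapsto J_1w+J_2v+J_3u$ is minimal. *)

theory Defs
  imports "HOL-Analysis.Analysis"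
begin

definition spin_energy :: "real^3 \<Rightarrow> real^3 \<Rightarrow> real^3 \<Rightarrow> real^3 \<Rightarrow> real" where
  "spin_energy J s1 s2 s3 = J$1 * (s2 \<bullet> s3) + J$2 * (s3 \<bullet> s1) + J$3 * (s1 \<bullet> s2)"

definition unit_spins :: "real^3 \<Rightarrow> real^3 \<Rightarrow> real^3 \<Rightarrow> bool" where
  "unit_spins s1 s2 s3 \<longleftrightarrow> norm s1 = 1 \<and> norm s2 = 1 \<and> norm s3 = 1"

definition ground_state :: "real^3 \<Rightarrow> real^3 \<Rightarrow> real^3 \<Rightarrow> real^3 \<Rightarrow> bool" where
  "ground_state J s1 s2 s3 \<longleftrightarrow> unit_spins s1 s2 s3 \<and>
     (\<forall>t1 t2 t3. unit_spins t1 t2 t3 \<longrightarrow> spin_energy J s1 s2 s3 \<le> spin_energy J t1 t2 t3)"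

definition E_min :: "real^3 \<Rightarrow> real" where
  "E_min J = (INF s \<in> {(s1,s2,s3). unit_spins s1 s2 s3}. (case s of (s1,s2,s3) \<Rightarrow> spin_energy J s1 s2 s3))"

text \<open>Determinant of the Gram matrix [[1,u,v],[u,1,w],[v,w,1]].\<close>
definition gram_det :: "real \<Rightarrow> real \<Rightarrow> real \<Rightarrow> real" where
  "gram_det x y z = 1 + 2 * x * y * z - (x^2 + y^2 + z^2)"

text \<open>Ising Gram coordinate vectors (w,v,u).\<close>
definition E_ising :: "nat \<Rightarrow> real^3" where
  "E_ising i = (if i = 0 then vector [1, 1, 1] else if i = 1 then vector [1, -1, -1]
               else if i = 2 then vector [-1, 1, -1] else vector [-1, -1, 1])"

end

theory Submission
  imports Defs
begin

lemma R1:
  fixes J1 J2 J3 :: real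
  assumes N0: "J1+J2+J3 > 0 \<or> J1*J2+J1*J3+J2*J3 < 0"
  and N1: "J1-J2-J3 > 0 \<or> J2*J3-J1*J2-J1*J3 < 0"
  and N2: "-J1+J2-J3 > 0 \<or> J1*J3-J1*J2-J2*J3 < 0"
  and N3: "-J1-J2+J3 > 0 \<or> J1*J2-J1*J3-J2*J3 < 0"
  shows "J1*J2*J3 > 0"
  using assms by (smt (z3) mult_nonneg_nonneg mult_nonpos_nonpos mult_nonneg_nonpos mult_nonpos_nonneg mult_pos_pos mult_neg_neg mult_pos_neg mult_neg_pos)

lemma R2:
  fixes J1 J2 J3 :: real
  assumes N0: "J1+J2+J3 > 0 \<or> J1*J2+J1*J3+J2*J3 < 0"
  and N1: "J1-J2-J3 > 0 \<or> J2*J3-J1*J2-J1*J3 < 0"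
  and N2: "-J1+J2-J3 > 0 \<or> J1*J3-J1*J2-J2*J3 < 0"
  and N3: "-J1-J2+J3 > 0 \<or> J1*J2-J1*J3-J2*J3 < 0"
  and P: "J1*J2*J3 > 0"
  shows "\<bar>J2*J3\<bar> < \<bar>J1*J2\<bar> + \<bar>J1*J3\<bar> \<and> \<bar>J1*J3\<bar> < \<bar>J1*J2\<bar> + \<bar>J2*J3\<bar> \<and> \<bar>J1*J2\<bar> < \<bar>J1*J3\<bar> + \<bar>J2*J3\<bar>"
proof -
  have s: "(J1 > 0 \<and> J2 > 0 \<and> J3 > 0) \<or> (J1 > 0 \<and> J2 < 0 \<and> J3 < 0) \<or> (J1 < 0 \<and> J2 > 0 \<and> J3 < 0) \<or> (J1 < 0 \<and> J2 < 0 \<and> J3 > 0)"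
    using P by (smt (z3) mult_nonneg_nonneg mult_nonpos_nonpos mult_nonneg_nonpos mult_nonpos_nonneg)
  have H: "y*z < x*(y+z)" if "x>0" "y>0" "z>0" "x > y+z \<or> y*z < x*(y+z)" for x y z :: real
  proof -
    have "(y+z)*(y+z) > y*z" using that by (smt (verit) mult_pos_pos mult_strict_right_mono distrib_left distrib_right)
    moreover have "x > y+z \<Longrightarrow> x*(y+z) > (y+z)*(y+z)" using that by (simp add: mult_strict_right_mono)
    ultimately show ?thesis using that by linarith
  qed
  from s show ?thesis
  proof (elim disjE conjE)
    assume "J1>0" "J2>0" "J3>0" thus ?thesis using H[of J1 J2 J3] H[of J2 J1 J3] H[of J3 J1 J2] N1 N2 N3
      by (simp add: algebra_simps abs_mult; smt)
  next
    assume "J1>0" "J2<0" "J3<0" thus ?thesis using H[of J1 "-J2" "-J3"] H[of "-J2" J1 "-J3"] H[of "-J3" J1 "-J2"] N0 N3 N2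
      by (simp add: algebra_simps abs_mult; smt)
  next
    assume "J1<0" "J2>0" "J3<0" thus ?thesis using H[of "-J1" "J2" "-J3"] H[of "J2" "-J1" "-J3"] H[of "-J3" "-J1" "J2"] N3 N0 N1
      by (simp add: algebra_simps abs_mult; smt)
  next
    assume "J1<0" "J2<0" "J3>0" thus ?thesis using H[of "-J1" "-J2" "J3"] H[of "-J2" "-J1" "J3"] H[of "J3" "-J1" "-J2"] N2 N1 N0
      by (simp add: algebra_simps abs_mult; smt)
  qed
qed

lemma nonising_conv:
  fixes t s :: real assumes "\<not> (t \<le> - sqrt s)" "s \<ge> 0" shows "t > 0 \<or> t^2 < s"
proof (rule ccontr)
  assume "\<not> (t > 0 \<or> t^2 < s)"
  hence "t \<le> 0" "s \<le> t^2" by auto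
  hence "sqrt s \<le> -t" using real_sqrt_le_mono[of s "t^2"] by simp
  thus False using assms(1) by linarith
qed

lemma inner3: "(x::real^3) \<bullet> y = x$1*y$1 + x$2*y$2 + x$3*y$3"
  by (simp add: inner_vec_def sum_3)

lemma pair_norm:
  fixes x y :: "real^3" assumes "norm x = 1" "norm y = 1"
  shows "(norm (a *\<^sub>R x + b *\<^sub>R y))^2 = a^2 + b^2 + 2*a*b*(x \<bullet> y)"
proof -
  have "x \<bullet> x = 1" "y \<bullet> y = 1" using assms power2_norm_eq_inner[of x] power2_norm_eq_inner[of y] by auto
  thus ?thesis unfolding power2_norm_eq_inner
    by (simp add: inner_add_left inner_add_right inner_commute[of y x] algebra_simps power2_eq_square)
qed

lemma comb_norm:
  fixes s1 s2 s3 :: "real^3" assumes "unit_spins s1 s2 s3"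
  shows "(norm (a*\<^sub>R s1 + b*\<^sub>R s2 + c*\<^sub>R s3))^2 = a^2+b^2+c^2 + 2*(b*c*(s2\<bullet>s3) + a*c*(s3\<bullet>s1) + a*b*(s1\<bullet>s2))"
proof -
  have "s1 \<bullet> s1 = 1" "s2 \<bullet> s2 = 1" "s3 \<bullet> s3 = 1" using assms unfolding unit_spins_def
    using power2_norm_eq_inner[of s1] power2_norm_eq_inner[of s2] power2_norm_eq_inner[of s3] by auto
  thus ?thesis unfolding power2_norm_eq_inner
    by (simp add: inner_add_left inner_add_right inner_commute[of s2 s1] inner_commute[of s3 s1] inner_commute[of s3 s2] algebra_simps power2_eq_square)
qed

lemma alg:
  fixes a b c J1 J2 J3 U V W K :: real
  assumes nz: "a \<noteq> 0" "b \<noteq> 0" "c \<noteq> 0"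
  and tri: "\<bar>a\<bar> < \<bar>b\<bar> + \<bar>c\<bar>" "\<bar>b\<bar> < \<bar>a\<bar> + \<bar>c\<bar>" "\<bar>c\<bar> < \<bar>a\<bar> + \<bar>b\<bar>"
  and J1_def: "J1 = b*c" and J2_def: "J2 = a*c" and J3_def: "J3 = a*b"
  and U_def: "U = (c^2-a^2-b^2)/(2*a*b)" and V_def: "V = (b^2-a^2-c^2)/(2*a*c)" and W_def: "W = (a^2-b^2-c^2)/(2*b*c)"
  and K_def: "K = 2*(a^2*b^2+b^2*c^2+c^2*a^2) - a^4 - b^4 - c^4"
  shows "J1/(2 * J2) * (J2^2/J3^2 - 1) - J2/(2 * J1) = U"
    and "J1/(2 * J3) * (J3^2/J2^2 - 1) - J3/(2 * J1) = V"
    and "J2/(2 * J3) * (J3^2/J1^2 - 1) - J3/(2 * J2) = W"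
    and "K > 0"
    and "- 2 * J1^3 * J2^3 * J3^3 /
                 (J1^4 * (J2^2 - J3^2)^2 - 2 * J1^2 * J2^2 * J3^2 * (J2^2 + J3^2) + J2^4 * J3^4) = 2*a^2*b^2*c^2/K"
    and "U*V - W = K/(4*a^2*b*c)" and "W*U - V = K/(4*a*b^2*c)" and "V*W - U = K/(4*a*b*c^2)"
    and "1 + 2*U*V*W - (U^2+V^2+W^2) = 0"
    and "1 - U^2 = K/(4*a^2*b^2)" and "1 - V^2 = K/(4*a^2*c^2)" and "1 - W^2 = K/(4*b^2*c^2)"
proof -
  show "J1/(2 * J2) * (J2^2/J3^2 - 1) - J2/(2 * J1) = U"
    unfolding J1_def J2_def J3_def U_def using nz by (simp add: field_simps power2_eq_square)
  show "J1/(2 * J3) * (J3^2/J2^2 - 1) - J3/(2 * J1) = V"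
    unfolding J1_def J2_def J3_def V_def using nz by (simp add: field_simps power2_eq_square)
  show "J2/(2 * J3) * (J3^2/J1^2 - 1) - J3/(2 * J2) = W"
    unfolding J1_def J2_def J3_def W_def using nz by (simp add: field_simps power2_eq_square)
  define A where "A = \<bar>a\<bar>"
  define B where "B = \<bar>b\<bar>"
  define C where "C = \<bar>c\<bar>"
  have KA: "K = (A+B+C)*(-A+B+C)*(A-B+C)*(A+B-C)"
  proof -
    have "a^2 = A^2" "b^2 = B^2" "c^2 = C^2" "a^4 = A^4" "b^4 = B^4" "c^4 = C^4"
      unfolding A_def B_def C_def by (simp_all add: power_even_abs)
    moreover have "\<And>A B C::real. 2*(A^2*B^2+B^2*C^2+C^2*A^2) - A^4 - B^4 - C^4 = (A+B+C)*(-A+B+C)*(A-B+C)*(A+B-C)"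
      by algebra
    ultimately show ?thesis unfolding K_def by simp
  qed
  have "A > 0" "B > 0" "C > 0" using nz unfolding A_def B_def C_def by auto
  then show Kpos: "K > 0" unfolding KA using tri unfolding A_def B_def C_def by (simp add: mult_pos_pos)
  have D: "J1^4 * (J2^2 - J3^2)^2 - 2 * J1^2 * J2^2 * J3^2 * (J2^2 + J3^2) + J2^4 * J3^4 = -((a*b*c)^4 * K)"
    unfolding J1_def J2_def J3_def K_def by algebra
  show "- 2 * J1^3 * J2^3 * J3^3 /
                 (J1^4 * (J2^2 - J3^2)^2 - 2 * J1^2 * J2^2 * J3^2 * (J2^2 + J3^2) + J2^4 * J3^4) = 2*a^2*b^2*c^2/K"
    unfolding D using nz Kpos unfolding J1_def J2_def J3_def by (simp add: field_simps; algebra)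
  show "U*V - W = K/(4*a^2*b*c)" unfolding U_def V_def W_def K_def using nz by (simp add: field_simps; algebra)
  show "W*U - V = K/(4*a*b^2*c)" unfolding U_def V_def W_def K_def using nz by (simp add: field_simps; algebra)
  show "V*W - U = K/(4*a*b*c^2)" unfolding U_def V_def W_def K_def using nz by (simp add: field_simps; algebra)
  show "1 + 2*U*V*W - (U^2+V^2+W^2) = 0" unfolding U_def V_def W_def using nz by (simp add: field_simps; algebra)
  show "1 - U^2 = K/(4*a^2*b^2)" unfolding U_def K_def using nz by (simp add: field_simps; algebra)
  show "1 - V^2 = K/(4*a^2*c^2)" unfolding V_def K_def using nz by (simp add: field_simps; algebra)
  show "1 - W^2 = K/(4*b^2*c^2)" unfolding W_def K_def using nz by (simp add: field_simps; algebra)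
qed

theorem mainTheorem2:
  fixes J :: "real^3"
  assumes noIsing: "\<forall>i\<in>{0,1,2,3::nat}. \<not> (J \<bullet> E_ising i \<le> - norm J)"
  defines "J1 \<equiv> J$1" and "J2 \<equiv> J$2" and "J3 \<equiv> J$3"
  defines "u0 \<equiv> J1/(2 * J2) * (J2^2/J3^2 - 1) - J2/(2 * J1)"
      and "v0 \<equiv> J1/(2 * J3) * (J3^2/J2^2 - 1) - J3/(2 * J1)"
      and "w0 \<equiv> J2/(2 * J3) * (J3^2/J1^2 - 1) - J3/(2 * J2)"
      and "\<mu>0 \<equiv> - 2 * J1^3 * J2^3 * J3^3 /
                 (J1^4 * (J2^2 - J3^2)^2 - 2 * J1^2 * J2^2 * J3^2 * (J2^2 + J3^2) + J2^4 * J3^4)"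
  shows "(\<exists>s1 s2 s3. ground_state J s1 s2 s3) \<and>
         (\<forall>s1 s2 s3. ground_state J s1 s2 s3 \<longrightarrow>
            (let u = s1 \<bullet> s2; v = s1 \<bullet> s3; w = s2 \<bullet> s3 in
              dim {s1, s2, s3} \<le> 2 \<and> gram_det u v w = 0 \<and>
              -1 < u \<and> u < 1 \<and> -1 < v \<and> v < 1 \<and> -1 < w \<and> w < 1 \<and>
              J1 = 2 * \<mu>0 * (u * v - w) \<and> J2 = 2 * \<mu>0 * (w * u - v) \<and> J3 = 2 * \<mu>0 * (v * w - u) \<and>
              u = u0 \<and> v = v0 \<and> w = w0 \<and>
              spin_energy J s1 s2 s3 = J1 * w + J2 * v + J3 * u)) \<and>
         E_min J = J1 * w0 + J2 * v0 + J3 * u0"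
proof -
  have nJ: "norm J = sqrt (J1^2+J2^2+J3^2)"
    by (simp add: norm_eq_sqrt_inner inner3 J1_def J2_def J3_def power2_eq_square)
  have e0: "J \<bullet> E_ising 0 = J1+J2+J3" by (simp add: E_ising_def inner3 J1_def J2_def J3_def)
  have e1: "J \<bullet> E_ising 1 = J1-J2-J3" by (simp add: E_ising_def inner3 J1_def J2_def J3_def)
  have e2: "J \<bullet> E_ising 2 = -J1+J2-J3" by (simp add: E_ising_def inner3 J1_def J2_def J3_def)
  have e3: "J \<bullet> E_ising 3 = -J1-J2+J3" by (simp add: E_ising_def inner3 J1_def J2_def J3_def)
  have s0: "J1^2+J2^2+J3^2 \<ge> 0" by simp
  have N0: "J1+J2+J3 > 0 \<or> J1*J2+J1*J3+J2*J3 < 0"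
  proof -
    have "J1+J2+J3 > 0 \<or> (J1+J2+J3)^2 < J1^2+J2^2+J3^2"
      using nonising_conv[OF _ s0, of "J1+J2+J3"] noIsing e0 nJ by auto
    moreover have "(J1+J2+J3)^2 = J1^2+J2^2+J3^2 + 2*(J1*J2+J1*J3+J2*J3)" by (simp add: power2_eq_square algebra_simps)
    ultimately show ?thesis by (smt (verit))
  qed
  have N1: "J1-J2-J3 > 0 \<or> J2*J3-J1*J2-J1*J3 < 0"
  proof -
    have "J1-J2-J3 > 0 \<or> (J1-J2-J3)^2 < J1^2+J2^2+J3^2"
      using nonising_conv[OF _ s0, of "J1-J2-J3"] noIsing e1 nJ by auto
    moreover have "(J1-J2-J3)^2 = J1^2+J2^2+J3^2 + 2*(J2*J3-J1*J2-J1*J3)" by (simp add: power2_eq_square algebra_simps)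
    ultimately show ?thesis by (smt (verit))
  qed
  have N2: "-J1+J2-J3 > 0 \<or> J1*J3-J1*J2-J2*J3 < 0"
  proof -
    have "-J1+J2-J3 > 0 \<or> (-J1+J2-J3)^2 < J1^2+J2^2+J3^2"
      using nonising_conv[OF _ s0, of "-J1+J2-J3"] noIsing e2 nJ by auto
    moreover have "(-J1+J2-J3)^2 = J1^2+J2^2+J3^2 + 2*(J1*J3-J1*J2-J2*J3)" by (simp add: power2_eq_square algebra_simps)
    ultimately show ?thesis by (smt (verit))
  qed
  have N3: "-J1-J2+J3 > 0 \<or> J1*J2-J1*J3-J2*J3 < 0"
  proof -
    have "-J1-J2+J3 > 0 \<or> (-J1-J2+J3)^2 < J1^2+J2^2+J3^2"
      using nonising_conv[OF _ s0, of "-J1-J2+J3"] noIsing e3 nJ by auto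
    moreover have "(-J1-J2+J3)^2 = J1^2+J2^2+J3^2 + 2*(J1*J2-J1*J3-J2*J3)" by (simp add: power2_eq_square algebra_simps)
    ultimately show ?thesis by (smt (verit))
  qed
  have P: "J1*J2*J3 > 0" by (rule R1[OF N0 N1 N2 N3])
  note T = R2[OF N0 N1 N2 N3 P]
  have J1nz: "J1 \<noteq> 0" and J2nz: "J2 \<noteq> 0" and J3nz: "J3 \<noteq> 0" using P by auto
  have "J2*J3/J1 = (J1*J2*J3)/J1^2" using J1nz by (simp add: field_simps power2_eq_square)
  hence qpos: "J2*J3/J1 > 0" using P J1nz by simp
  define a where "a = sqrt (J2*J3/J1)"
  have apos: "a > 0" unfolding a_def using qpos by simp
  have a2: "a^2 = J2*J3/J1" unfolding a_def using qpos by simp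
  define b where "b = J3/a"
  define c where "c = J2/a"
  have hJ3: "J3 = a*b" unfolding b_def using apos by simp
  have hJ2: "J2 = a*c" unfolding c_def using apos by simp
  have hJ1: "J1 = b*c"
  proof -
    have "b*c = J2*J3/a^2" unfolding b_def c_def by (simp add: power2_eq_square)
    also have "\<dots> = J1" unfolding a2 using J1nz J2nz J3nz by (simp add: field_simps)
    finally show ?thesis by simp
  qed
  have anz: "a \<noteq> 0" and bnz: "b \<noteq> 0" and cnz: "c \<noteq> 0" using apos hJ2 hJ3 J2nz J3nz by auto
  have m: "\<bar>a*b*c\<bar> > 0" using anz bnz cnz by simp
  have "\<bar>a\<bar>*\<bar>a*b*c\<bar> < (\<bar>b\<bar>+\<bar>c\<bar>)*\<bar>a*b*c\<bar>"
    using conjunct1[OF T] unfolding hJ1 hJ2 hJ3 by (simp add: abs_mult algebra_simps power2_eq_square)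
  hence t1: "\<bar>a\<bar> < \<bar>b\<bar>+\<bar>c\<bar>" using m by (simp add: mult_less_cancel_right)
  have "\<bar>b\<bar>*\<bar>a*b*c\<bar> < (\<bar>a\<bar>+\<bar>c\<bar>)*\<bar>a*b*c\<bar>"
    using conjunct1[OF conjunct2[OF T]] unfolding hJ1 hJ2 hJ3 by (simp add: abs_mult algebra_simps power2_eq_square)
  hence t2: "\<bar>b\<bar> < \<bar>a\<bar>+\<bar>c\<bar>" using m by (simp add: mult_less_cancel_right)
  have "\<bar>c\<bar>*\<bar>a*b*c\<bar> < (\<bar>a\<bar>+\<bar>b\<bar>)*\<bar>a*b*c\<bar>"
    using conjunct2[OF conjunct2[OF T]] unfolding hJ1 hJ2 hJ3 by (simp add: abs_mult algebra_simps power2_eq_square)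
  hence t3: "\<bar>c\<bar> < \<bar>a\<bar>+\<bar>b\<bar>" using m by (simp add: mult_less_cancel_right)
  define U where "U = (c^2-a^2-b^2)/(2*a*b)"
  define V where "V = (b^2-a^2-c^2)/(2*a*c)"
  define W where "W = (a^2-b^2-c^2)/(2*b*c)"
  define K where "K = 2*(a^2*b^2+b^2*c^2+c^2*a^2) - a^4 - b^4 - c^4"
  note A = alg[OF anz bnz cnz t1 t2 t3 hJ1 hJ2 hJ3 U_def V_def W_def K_def]
  have u0U: "u0 = U" unfolding u0_def by (rule A(1))
  have v0V: "v0 = V" unfolding v0_def by (rule A(2))
  have w0W: "w0 = W" unfolding w0_def by (rule A(3))
  have Kpos: "K > 0" by (rule A(4))
  have mu: "\<mu>0 = 2*a^2*b^2*c^2/K" unfolding \<mu>0_def by (rule A(5))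
  have "K/(4*a^2*b^2) > 0" using Kpos anz bnz by simp
  hence U1: "U^2 < 1" using A(10) by linarith
  have "K/(4*a^2*c^2) > 0" using Kpos anz cnz by simp
  hence V1: "V^2 < 1" using A(11) by linarith
  have "K/(4*b^2*c^2) > 0" using Kpos bnz cnz by simp
  hence W1: "W^2 < 1" using A(12) by linarith
  define E0 where "E0 = -(a^2+b^2+c^2)/2"
  have energy: "spin_energy J t1 t2 t3 = ((norm (a*\<^sub>R t1 + b*\<^sub>R t2 + c*\<^sub>R t3))^2 - (a^2+b^2+c^2))/2"
    if "unit_spins t1 t2 t3" for t1 t2 t3
    using comb_norm[OF that, of a b c] unfolding spin_energy_def J1_def[symmetric] J2_def[symmetric] J3_def[symmetric] hJ1 hJ2 hJ3
    by (simp add: algebra_simps)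
  have lower: "E0 \<le> spin_energy J t1 t2 t3" if "unit_spins t1 t2 t3" for t1 t2 t3
    unfolding energy[OF that] E0_def by simp
  have eqzero: "a*\<^sub>R t1 + b*\<^sub>R t2 + c*\<^sub>R t3 = 0" if "unit_spins t1 t2 t3" "spin_energy J t1 t2 t3 \<le> E0" for t1 t2 t3
  proof -
    have "(norm (a*\<^sub>R t1 + b*\<^sub>R t2 + c*\<^sub>R t3))^2 \<le> 0" using that(2) unfolding energy[OF that(1)] E0_def by simp
    thus ?thesis by simp
  qed
  define w1 :: "real^3" where "w1 = vector [1,0,0]"
  define w2 :: "real^3" where "w2 = vector [U, sqrt (1-U^2), 0]"
  define w3 :: "real^3" where "w3 = (-1/c) *\<^sub>R (a *\<^sub>R w1 + b *\<^sub>R w2)"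
  have nw1: "norm w1 = 1" unfolding w1_def by (simp add: norm_eq_sqrt_inner inner3)
  have nw2: "norm w2 = 1" unfolding w2_def using U1 by (simp add: norm_eq_sqrt_inner inner3 power2_eq_square[symmetric])
  have w12: "w1 \<bullet> w2 = U" unfolding w1_def w2_def by (simp add: inner3)
  have "(norm (a *\<^sub>R w1 + b *\<^sub>R w2))^2 = c^2"
    unfolding pair_norm[OF nw1 nw2] w12 U_def using anz bnz by (simp add: field_simps)
  hence "sqrt ((norm (a *\<^sub>R w1 + b *\<^sub>R w2))^2) = sqrt (c^2)" by simp
  hence "norm (a *\<^sub>R w1 + b *\<^sub>R w2) = \<bar>c\<bar>" by simp
  hence nw3: "norm w3 = 1" unfolding w3_def using cnz by simp
  have uw: "unit_spins w1 w2 w3" unfolding unit_spins_def using nw1 nw2 nw3 by simp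
  have "a*\<^sub>R w1 + b*\<^sub>R w2 + c*\<^sub>R w3 = 0" unfolding w3_def using cnz by simp
  hence Ew: "spin_energy J w1 w2 w3 = E0" unfolding energy[OF uw] E0_def by simp
  have gw: "ground_state J w1 w2 w3" unfolding ground_state_def using uw lower Ew by simp
  have GS: "dim {s1, s2, s3} \<le> 2 \<and> s1 \<bullet> s2 = U \<and> s1 \<bullet> s3 = V \<and> s2 \<bullet> s3 = W"
    if gs: "ground_state J s1 s2 s3" for s1 s2 s3
  proof -
    have us: "unit_spins s1 s2 s3" using gs unfolding ground_state_def by simp
    have n1: "norm s1 = 1" and n2: "norm s2 = 1" and n3: "norm s3 = 1" using us unfolding unit_spins_def by auto
    have "spin_energy J s1 s2 s3 \<le> E0" using gs uw Ew unfolding ground_state_def by metis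
    hence z: "a*\<^sub>R s1 + b*\<^sub>R s2 + c*\<^sub>R s3 = 0" using eqzero us by blast
    have z1: "a*\<^sub>R s1 + b*\<^sub>R s2 = - (c*\<^sub>R s3)" using z by (simp add: eq_neg_iff_add_eq_0)
    have z2: "a*\<^sub>R s1 + c*\<^sub>R s3 = - (b*\<^sub>R s2)" using z by (simp add: eq_neg_iff_add_eq_0 algebra_simps)
    have z3: "b*\<^sub>R s2 + c*\<^sub>R s3 = - (a*\<^sub>R s1)" using z by (simp add: eq_neg_iff_add_eq_0 algebra_simps)
    have "a^2 + b^2 + 2*a*b*(s1 \<bullet> s2) = c^2"
      using pair_norm[OF n1 n2, of a b] unfolding z1 using n3 by (simp add: power_mult_distrib)
    hence u: "s1 \<bullet> s2 = U" unfolding U_def using anz bnz by (simp add: field_simps)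
    have "a^2 + c^2 + 2*a*c*(s1 \<bullet> s3) = b^2"
      using pair_norm[OF n1 n3, of a c] unfolding z2 using n2 by (simp add: power_mult_distrib)
    hence v: "s1 \<bullet> s3 = V" unfolding V_def using anz cnz by (simp add: field_simps)
    have "b^2 + c^2 + 2*b*c*(s2 \<bullet> s3) = a^2"
      using pair_norm[OF n2 n3, of b c] unfolding z3 using n1 by (simp add: power_mult_distrib)
    hence w: "s2 \<bullet> s3 = W" unfolding W_def using bnz cnz by (simp add: field_simps)
    have "a *\<^sub>R s1 = -(b *\<^sub>R s2 + c *\<^sub>R s3)" using z by (simp add: eq_neg_iff_add_eq_0 algebra_simps)
    hence "s1 = (1/a) *\<^sub>R (-(b *\<^sub>R s2 + c *\<^sub>R s3))" using anz by (metis scaleR_scaleR divide_self_if scaleR_one times_divide_eq_left mult_1)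
    moreover have "(1/a) *\<^sub>R (-(b *\<^sub>R s2 + c *\<^sub>R s3)) \<in> span {s2, s3}"
      by (intro span_scale span_neg span_add span_base) auto
    ultimately have "s1 \<in> span {s2, s3}" by simp
    hence "span {s1, s2, s3} = span {s2, s3}" by (simp add: span_redundant)
    hence "dim {s1, s2, s3} = dim {s2, s3}" by (metis dim_span)
    also have "\<dots> \<le> card {s2, s3}" by (rule dim_le_card) (auto intro: span_base)
    also have "\<dots> \<le> 2" by (simp add: card_insert_if)
    finally show ?thesis using u v w by simp
  qed
  have Eeq: "E0 = J1 * w0 + J2 * v0 + J3 * u0"
    unfolding E0_def u0U v0V w0W U_def V_def W_def hJ1 hJ2 hJ3 using anz bnz cnz
    by (simp add: field_simps power2_eq_square)
  have Emin: "E_min J = E0"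
    unfolding E_min_def
  proof (rule cInf_eq_minimum)
    show "E0 \<in> (\<lambda>s. case s of (s1, s2, s3) \<Rightarrow> spin_energy J s1 s2 s3) ` {(s1, s2, s3). unit_spins s1 s2 s3}"
      using uw Ew by (auto intro!: image_eqI[where x="(w1,w2,w3)"])
  next
    fix x assume "x \<in> (\<lambda>s. case s of (s1, s2, s3) \<Rightarrow> spin_energy J s1 s2 s3) ` {(s1, s2, s3). unit_spins s1 s2 s3}"
    thus "E0 \<le> x" using lower by auto
  qed
  have Knz: "K \<noteq> 0" using Kpos by simp
  show ?thesis
  proof (intro conjI allI impI)
    show "\<exists>s1 s2 s3. ground_state J s1 s2 s3" using gw by blast
  next
    show "E_min J = J1 * w0 + J2 * v0 + J3 * u0" using Emin Eeq by simp
  next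
    fix s1 s2 s3 assume gs: "ground_state J s1 s2 s3"
    note G = GS[OF gs]
    have lag1: "J1 = 2 * \<mu>0 * (U * V - W)" unfolding mu A(6) hJ1 using anz bnz cnz Knz by (simp add: field_simps power2_eq_square)
    have lag2: "J2 = 2 * \<mu>0 * (W * U - V)" unfolding mu A(7) hJ2 using anz bnz cnz Knz by (simp add: field_simps power2_eq_square)
    have lag3: "J3 = 2 * \<mu>0 * (V * W - U)" unfolding mu A(8) hJ3 using anz bnz cnz Knz by (simp add: field_simps power2_eq_square)
    have gd: "gram_det U V W = 0" unfolding gram_det_def using A(9) by simp
    have b1: "-1 < U \<and> U < 1" using U1 abs_square_less_1[of U] by (simp add: abs_less_iff)
    have b2: "-1 < V \<and> V < 1" using V1 abs_square_less_1[of V] by (simp add: abs_less_iff)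
    have b3: "-1 < W \<and> W < 1" using W1 abs_square_less_1[of W] by (simp add: abs_less_iff)
    have en: "spin_energy J s1 s2 s3 = J1 * (s2 \<bullet> s3) + J2 * (s1 \<bullet> s3) + J3 * (s1 \<bullet> s2)"
      unfolding spin_energy_def J1_def J2_def J3_def by (simp add: inner_commute)
    show "let u = s1 \<bullet> s2; v = s1 \<bullet> s3; w = s2 \<bullet> s3 in
              dim {s1, s2, s3} \<le> 2 \<and> gram_det u v w = 0 \<and>
              -1 < u \<and> u < 1 \<and> -1 < v \<and> v < 1 \<and> -1 < w \<and> w < 1 \<and>
              J1 = 2 * \<mu>0 * (u * v - w) \<and> J2 = 2 * \<mu>0 * (w * u - v) \<and> J3 = 2 * \<mu>0 * (v * w - u) \<and>
              u = u0 \<and> v = v0 \<and> w = w0 \<and>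
              spin_energy J s1 s2 s3 = J1 * w + J2 * v + J3 * u"
      unfolding Let_def using G lag1 lag2 lag3 gd b1 b2 b3 en u0U v0V w0W by simp
  qed
qed

end
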